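(* Assume $f$ satisfies conditions (A0)–(A3) below. Then there exists a constant $C>0$ such that every $2\pi$-periodic solution $x$ of the system $\ddot x(t)=f(t,x(t),\mathbf x_t,\dot x(t))$ satisfies $|x(t)|<C$, $|\dot x(t)|<C$ and $|\ddot x(t)|<C$ for all $t\in\mathbb R$.
   Context: Let $n,m\ge 1$ be integers, $\mathbf V=\mathbb R^n$ with Euclidean inner product $x\bullet z$ and norm $|x|$. For $\mathbf y=(y^1,\dots,y^m)\in\mathbf V^m$ put $|\mathbf y|:=\max_{1\le j\le m}|y^j|$. Fix reals $0=\tau_0<\tau_1<\dots<\tau_m<2\pi$ with $\tau_{m-j+1}=2\pi-\tau_j$ for $j=1,\dots,m$. Let $f:\mathbb R\times\mathbf V\times\mathbf V^m\times\mathbf V\to\mathbf V$, and for a function $x:\mathbb R\to\mathbf V$ put $\mathbf x_t:=(x(t-\tau_1),\dots,x(t-\tau_m))$. A $2\pi$-periodic solution is a $C^2$ function $x:\mathbb R\to\mathbf V$ with $x(t+2\pi)=x(t)$ and $\ddot x(t)=f(t,x(t),\mathbf x_t,\dot x(t))$ for all $t$. Conditions: (A0) $f$ is continuous and $f(t+2\pi,x,\mathbf y,z)=f(t,x,\mathbf y,z)$ for all arguments. (A1) There is $R>0$ such that for all $t\in\mathbb R$, $x,z\in\mathbf V$, $\mathbf y\in\mathbf V^m$: if $|x|\ge R$, $|\mathbf y|\le|x|$ and $x\bullet z=0$, then $x\bullet f(t,x,\mathbf y,z)>0$. (A2) There is a continuous $\phi:[0,\infty)\to(0,\infty)$ with $\int_0^\infty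 \frac{s\,ds}{\phi(s)}=\infty$ and $|f(t,x,\mathbf y,z)|\le\phi(|z|)$ for all $t$, all $|x|\le R$, $|\mathbf y|\le R$ and all $z$. (A3) There are constants $\alpha>0,K>0$ with $|f(t,x,\mathbf y,z)|\le\alpha\big(x\bullet f(t,x,\mathbf y,z)+|z|^2\big)+K$ for all $t$, all $|x|\le R$, $|\mathbf y|\le R$ and all $z$. *)

theory Defs
  imports "HOL-Analysis.Analysis"
begin

text \<open>Delay vectors y = (y^1,...,y^m) are modelled as functions nat => real^'n,
  only the values at indices 1..m being relevant.
  Max norm |y| = max over j in {1..m} of |y^j|.\<close>

definition ynorm :: "nat \<Rightarrow> (nat \<Rightarrow> real^'n) \<Rightarrow> real" where
  "ynorm m y = Max ((\<lambda>j. norm (y j)) ` {1..m})"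

definition delayed :: "nat \<Rightarrow> (nat \<Rightarrow> real) \<Rightarrow> (real \<Rightarrow> real^'n) \<Rightarrow> real \<Rightarrow> (nat \<Rightarrow> real^'n)" where
  "delayed m \<tau> x t = (\<lambda>j. if j \<in> {1..m} then x (t - \<tau> j) else 0)"

definition periodic_solution ::
  "nat \<Rightarrow> (nat \<Rightarrow> real) \<Rightarrow> (real \<Rightarrow> real^'n \<Rightarrow> (nat \<Rightarrow> real^'n) \<Rightarrow> real^'n \<Rightarrow> real^'n)
    \<Rightarrow> (real \<Rightarrow> real^'n) \<Rightarrow> (real \<Rightarrow> real^'n) \<Rightarrow> (real \<Rightarrow> real^'n) \<Rightarrow> bool" where
  "periodic_solution m \<tau> f x x' x'' \<longleftrightarrow>
     (\<forall>t. (x has_vector_derivative x' t) (at t)) \<and>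
     (\<forall>t. (x' has_vector_derivative x'' t) (at t)) \<and>
     continuous_on UNIV x'' \<and>
     (\<forall>t. x (t + 2 * pi) = x t) \<and>
     (\<forall>t. x'' t = f t (x t) (delayed m \<tau> x t) (x' t))"

end

theory Submission
  imports Defs
begin

lemma vd_inner:
  fixes f g :: "real \<Rightarrow> 'a::real_inner"
  assumes "(f has_vector_derivative f') (at t)" "(g has_vector_derivative g') (at t)"
  shows "((\<lambda>s. f s \<bullet> g s) has_real_derivative (f t \<bullet> g' + f' \<bullet> g t)) (at t)"
proof -
  have "((\<lambda>s. f s \<bullet> g s) has_derivative (\<lambda>h. f t \<bullet> (h *\<^sub>R g') + (h *\<^sub>R f') \<bullet> g t)) (at t)"
    using has_derivative_inner[OF assms[unfolded has_vector_derivative_def]] .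
  moreover have "(\<lambda>h. f t \<bullet> (h *\<^sub>R g') + (h *\<^sub>R f') \<bullet> g t) = (\<lambda>h. (f t \<bullet> g' + f' \<bullet> g t) * h)"
    by (auto simp: algebra_simps)
  ultimately have "((\<lambda>s. f s \<bullet> g s) has_derivative (\<lambda>h. (f t \<bullet> g' + f' \<bullet> g t) * h)) (at t)"
    by simp
  then show ?thesis
    unfolding has_field_derivative_def by assumption
qed

lemma periodic_shift_nat:
  assumes "\<And>t. x (t + p) = x t"
  shows "x (u + real n * p) = x u"
proof (induction n)
  case (Suc n)
  have "x (u + real (Suc n) * p) = x ((u + real n * p) + p)" by (simp add: algebra_simps)
  then show ?case using assms Suc by simp
qed simp

lemma periodic_max:
  fixes x :: "real \<Rightarrow> 'a::real_normed_vector"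
  assumes c: "continuous_on UNIV x" and per: "\<And>t. x (t + 2*pi) = x t"
  shows "\<exists>t0. \<forall>t. norm (x t) \<le> norm (x t0)"
proof -
  have "continuous_on {0..2*pi} (\<lambda>t. norm (x t))"
    by (intro continuous_intros continuous_on_subset[OF c]) auto
  then obtain t0 where t0: "t0 \<in> {0..2*pi}" and mx: "\<And>s. s \<in> {0..2*pi} \<Longrightarrow> norm (x s) \<le> norm (x t0)"
    using continuous_attains_sup[of "{0..2*pi}" "\<lambda>t. norm (x t)"] by auto
  show ?thesis
  proof (intro exI allI)
    fix t
    define k where "k = floor (t / (2*pi))"
    define s where "s = t - 2*pi*k"
    have "k \<le> t/(2*pi)" "t/(2*pi) < k + 1" unfolding k_def by linarith+
    then have "2*pi*k \<le> t" "t < 2*pi*(k+1)" by (simp_all add: field_simps)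
    then have s01: "s \<in> {0..2*pi}" unfolding s_def by (auto simp: algebra_simps)
    have "x t = x s"
    proof (cases "k \<ge> 0")
      case True
      have "x (s + real (nat k) * (2*pi)) = x s" by (rule periodic_shift_nat[of x "2*pi", OF per])
      moreover have "s + real (nat k) * (2*pi) = t" using True unfolding s_def by simp
      ultimately show ?thesis by simp
    next
      case False
      have "x (t + real (nat (-k)) * (2*pi)) = x t" by (rule periodic_shift_nat[of x "2*pi", OF per])
      moreover have "t + real (nat (-k)) * (2*pi) = s" using False unfolding s_def by simp
      ultimately show ?thesis by simp
    qed
    then show "norm (x t) \<le> norm (x t0)" using mx[OF s01] by simp
  qed
qed

lemma max_second_deriv:
  fixes r :: "real \<Rightarrow> real"
  assumes d1: "\<And>t. (r has_real_derivative r' t) (at t)"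
    and d2: "(r' has_real_derivative c) (at t0)"
    and mx: "\<And>t. r t \<le> r t0"
  shows "r' t0 = 0 \<and> c \<le> 0"
proof
  show z: "r' t0 = 0"
    by (rule DERIV_local_max[OF d1 zero_less_one]) (use mx in auto)
  show "c \<le> 0"
  proof (rule ccontr)
    assume "\<not> c \<le> 0"
    then have "c > 0" by simp
    from DERIV_pos_inc_right[OF d2 this] obtain d where d: "d > 0"
      and inc: "\<And>h. 0 < h \<Longrightarrow> h < d \<Longrightarrow> r' t0 < r' (t0 + h)" by auto
    define h where "h = d/2"
    have h: "0 < h" "h < d" using d unfolding h_def by auto
    obtain z where z1: "t0 < z" "z < t0 + h" and eq: "r (t0+h) - r t0 = (t0 + h - t0) * r' z"
      using MVT2[of t0 "t0+h" r r'] d1 h by auto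
    have "r' z > 0" using inc[of "z - t0"] z1 h z by auto
    then have "r (t0+h) > r t0" using eq h by (simp add: field_simps)
    then show False using mx[of "t0+h"] by simp
  qed
qed


lemma ynorm_delayed_le:
  assumes "m \<ge> 1" "\<And>s. norm (x s) \<le> c"
  shows "ynorm m (delayed m \<tau> x t) \<le> c"
  unfolding ynorm_def delayed_def using assms
  by (subst Max_le_iff) auto

lemma deriv_periodic:
  fixes x :: "real \<Rightarrow> 'a::real_normed_vector"
  assumes d1: "\<And>t. (x has_vector_derivative x' t) (at t)"
    and per: "\<And>t. x (t + p) = x t"
  shows "x' (t + p) = x' t"
proof -
  have sh: "((\<lambda>s. s + p) has_vector_derivative 1) (at t)"
    by (auto intro!: derivative_eq_intros simp: has_real_derivative_iff_has_vector_derivative[symmetric])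
  have "((x \<circ> (\<lambda>s. s + p)) has_vector_derivative (1 *\<^sub>R x' (t + p))) (at t)"
    by (rule vector_diff_chain_at[OF sh]) (simp add: d1)
  moreover have "x \<circ> (\<lambda>s. s + p) = x" using per by (auto simp: fun_eq_iff)
  ultimately have "(x has_vector_derivative x' (t + p)) (at t)" by simp
  then show ?thesis using vector_derivative_unique_at[OF _ d1] by blast
qed

theorem theorem3p1:
  fixes m :: nat and \<tau> :: "nat \<Rightarrow> real" and R :: real and \<phi> :: "real \<Rightarrow> real"
    and \<alpha> K :: real
    and f :: "real \<Rightarrow> real^'n \<Rightarrow> (nat \<Rightarrow> real^'n) \<Rightarrow> real^'n \<Rightarrow> real^'n"
  assumes m_pos: "m \<ge> 1"
    and tau0: "\<tau> 0 = 0"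
    and tau_mono: "\<And>j. j < m \<Longrightarrow> \<tau> j < \<tau> (Suc j)"
    and tau_lt: "\<tau> m < 2 * pi"
    and tau_sym: "\<And>j. j \<in> {1..m} \<Longrightarrow> \<tau> (m - j + 1) = 2 * pi - \<tau> j"
    and A0_cont: "continuous_on UNIV (\<lambda>(t, x, y, z). f t x y z)"
    and A0_per: "\<And>t x y z. f (t + 2 * pi) x y z = f t x y z"
    and R_pos: "R > 0"
    and A1: "\<And>t x y z. norm x \<ge> R \<Longrightarrow> ynorm m y \<le> norm x \<Longrightarrow> x \<bullet> z = 0
               \<Longrightarrow> x \<bullet> f t x y z > 0"
    and phi_cont: "continuous_on {0..} \<phi>"
    and phi_pos: "\<And>s. s \<ge> 0 \<Longrightarrow> \<phi> s > 0"
    and phi_int: "filterlim (\<lambda>b. integral {0..b} (\<lambda>s. s / \<phi> s)) at_top at_top"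
    and A2: "\<And>t x y z. norm x \<le> R \<Longrightarrow> ynorm m y \<le> R \<Longrightarrow> norm (f t x y z) \<le> \<phi> (norm z)"
    and alpha_pos: "\<alpha> > 0" and K_pos: "K > 0"
    and A3: "\<And>t x y z. norm x \<le> R \<Longrightarrow> ynorm m y \<le> R \<Longrightarrow>
               norm (f t x y z) \<le> \<alpha> * (x \<bullet> f t x y z + (norm z)\<^sup>2) + K"
  shows "\<exists>C>0. \<forall>x x' x''. periodic_solution m \<tau> f x x' x'' \<longrightarrow>
            (\<forall>t. norm (x t) < C \<and> norm (x' t) < C \<and> norm (x'' t) < C)"
proof -
  define B where "B = 2 * pi * K"
  have B_pos: "B > 0" unfolding B_def using K_pos by simp
  have "continuous_on {0..B} \<phi>" using continuous_on_subset[OF phi_cont] by auto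
  then obtain s0 where s0: "s0 \<in> {0..B}" and smax: "\<And>s. s \<in> {0..B} \<Longrightarrow> \<phi> s \<le> \<phi> s0"
    using continuous_attains_sup[of "{0..B}" \<phi>] B_pos by auto
  define M where "M = \<phi> s0"
  have M_pos: "M > 0" unfolding M_def using phi_pos s0 by auto
  define C where "C = R + B + M + 1"
  show ?thesis
  proof (intro exI[of _ C] conjI allI impI)
    show "C > 0" unfolding C_def using R_pos B_pos M_pos by simp
    fix x x' x'' :: "real \<Rightarrow> real^'n" and t :: real
    assume ps: "periodic_solution m \<tau> f x x' x''"
    have d1: "\<And>t. (x has_vector_derivative x' t) (at t)"
      and d2: "\<And>t. (x' has_vector_derivative x'' t) (at t)"
      and cx'': "continuous_on UNIV x''"
      and per: "\<And>t. x (t + 2 * pi) = x t"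
      and eq: "\<And>t. x'' t = f t (x t) (delayed m \<tau> x t) (x' t)"
      using ps unfolding periodic_solution_def by auto
    have cx: "continuous_on UNIV x"
      using d1 has_vector_derivative_continuous continuous_at_imp_continuous_on by blast
    have cx': "continuous_on UNIV x'"
      using d2 has_vector_derivative_continuous continuous_at_imp_continuous_on by blast
    have per': "\<And>t. x' (t + 2 * pi) = x' t"
      using deriv_periodic[OF d1 per] .
    obtain t0 where t0: "\<And>s. norm (x s) \<le> norm (x t0)"
      using periodic_max[OF cx per] by blast
    have xR: "norm (x s) < R" for s
    proof -
      have r1: "((\<lambda>s. x s \<bullet> x s) has_real_derivative (x s \<bullet> x' s + x' s \<bullet> x s)) (at s)" for s
        using vd_inner[OF d1 d1] .
      have r2: "((\<lambda>s. x s \<bullet> x' s + x' s \<bullet> x s) has_real_derivative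
          ((x t0 \<bullet> x'' t0 + x' t0 \<bullet> x' t0) + (x' t0 \<bullet> x' t0 + x'' t0 \<bullet> x t0))) (at t0)"
        by (intro DERIV_add vd_inner d1 d2)
      have rmax: "x s \<bullet> x s \<le> x t0 \<bullet> x t0" for s
        using t0[of s] by (simp add: power2_norm_eq_inner[symmetric] power_mono)
      from max_second_deriv[OF r1 r2 rmax]
      have z: "x t0 \<bullet> x' t0 = 0" and c: "x t0 \<bullet> x'' t0 + x' t0 \<bullet> x' t0 \<le> 0"
        by (auto simp: inner_commute)
      have "norm (x t0) < R"
      proof (rule ccontr)
        assume "\<not> norm (x t0) < R"
        then have "norm (x t0) \<ge> R" by simp
        moreover have "ynorm m (delayed m \<tau> x t0) \<le> norm (x t0)"
          by (rule ynorm_delayed_le[OF m_pos t0])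
        ultimately have "x t0 \<bullet> x'' t0 > 0" using A1[OF _ _ z] eq by simp
        moreover have "x' t0 \<bullet> x' t0 \<ge> 0" by simp
        ultimately show False using c by simp
      qed
      then show ?thesis using t0[of s] by simp
    qed
    have xR': "norm (x s) \<le> R" for s using xR[of s] by simp
    have yR: "ynorm m (delayed m \<tau> x s) \<le> R" for s by (rule ynorm_delayed_le[OF m_pos xR'])
    have x'B: "norm (x' a) \<le> B" for a
    proof -
      define b where "b = a + 2 * pi"
      have ab: "a \<le> b" unfolding b_def by simp
      define q where "q s = x s \<bullet> x'' s + x' s \<bullet> x' s" for s
      have pq: "((\<lambda>s. x s \<bullet> x' s) has_vector_derivative q s) (at s within {a..b})" for s
        using vd_inner[OF d1 d2, of s] unfolding q_def
        by (simp add: has_real_derivative_iff_has_vector_derivative[symmetric] has_field_derivative_at_within)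
      have qi: "(q has_integral 0) {a..b}"
        using fundamental_theorem_of_calculus[OF ab pq] per per' unfolding b_def by simp
      have cq: "continuous_on UNIV q" unfolding q_def
        by (intro continuous_intros cx cx' cx'')
      have cn: "continuous_on UNIV (\<lambda>s. norm (x'' s))"
        by (intro continuous_intros cx'')
      have bnd: "norm (x'' s) \<le> \<alpha> * q s + K" for s
      proof -
        have "norm (x'' s) \<le> \<alpha> * (x s \<bullet> x'' s + (norm (x' s))\<^sup>2) + K"
          using A3[OF xR'[of s] yR[of s], of s "x' s"] eq[of s] by simp
        then show ?thesis unfolding q_def by (simp add: power2_norm_eq_inner)
      qed
      have gi: "((\<lambda>s. \<alpha> * q s + K) has_integral (\<alpha> * 0 + (b - a) * K)) {a..b}"
        using has_integral_add[OF has_integral_mult_right[OF qi, of \<alpha>] has_integral_const_real[of K a b]] ab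
        by simp
      define V where "V = integral {a..b} (\<lambda>s. norm (x'' s))"
      have intn: "(\<lambda>s. norm (x'' s)) integrable_on {c..d}" for c d
        by (rule integrable_continuous_real) (intro continuous_on_subset[OF cn], auto)
      have VB: "V \<le> B"
      proof -
        have "V \<le> integral {a..b} (\<lambda>s. \<alpha> * q s + K)"
          unfolding V_def by (rule integral_le[OF intn]) (use gi bnd in auto)
        also have "\<dots> = B" using integral_unique[OF gi] unfolding b_def B_def by simp
        finally show ?thesis .
      qed
      have diff: "norm (x' s - x' a) \<le> V" if s: "s \<in> {a..b}" for s
      proof -
        have "(x'' has_integral (x' s - x' a)) {a..s}"
          by (rule fundamental_theorem_of_calculus) (use s in \<open>auto intro: has_vector_derivative_at_within d2\<close>)
        then have "norm (x' s - x' a) = norm (integral {a..s} x'')" by (simp add: integral_unique)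
        also have "\<dots> \<le> integral {a..s} (\<lambda>s. norm (x'' s))"
          by (rule integral_norm_bound_integral)
             (auto intro!: intn integrable_continuous_real continuous_on_subset[OF cx''])
        also have "\<dots> \<le> V" unfolding V_def
          by (rule integral_subset_le) (use s in \<open>auto intro!: intn\<close>)
        finally show ?thesis .
      qed
      have mi: "(x' has_integral 0) {a..b}"
      proof -
        have "(x' has_integral (x b - x a)) {a..b}"
          by (rule fundamental_theorem_of_calculus[OF ab]) (auto intro: has_vector_derivative_at_within d1)
        then show ?thesis using per unfolding b_def by simp
      qed
      have "((\<lambda>s. x' a - x' s) has_integral ((b - a) *\<^sub>R x' a - 0)) {a..b}"
        using has_integral_diff[OF has_integral_const_real[of "x' a" a b] mi] ab by simp
      then have hi: "((\<lambda>s. x' a - x' s) has_integral ((2 * pi) *\<^sub>R x' a)) (cbox a b)"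
        unfolding b_def by simp
      have "norm ((2 * pi) *\<^sub>R x' a) \<le> V * measure lborel (cbox a b)"
        by (rule has_integral_bound[OF _ hi])
           (use diff diff[of a] ab in \<open>auto simp: norm_minus_commute b_def\<close>)
      then have "2 * pi * norm (x' a) \<le> V * (2 * pi)" using ab unfolding b_def by simp
      then have "norm (x' a) \<le> V" by simp
      then show ?thesis using VB by simp
    qed
    have "norm (x'' t) \<le> \<phi> (norm (x' t))"
      using A2[OF xR'[of t] yR[of t], of t "x' t"] eq[of t] by simp
    also have "\<dots> \<le> M" unfolding M_def using smax x'B[of t] by simp
    finally have "norm (x'' t) \<le> M" .
    then show "norm (x t) < C" "norm (x' t) < C" "norm (x'' t) < C"
      using xR[of t] x'B[of t] B_pos M_pos R_pos unfolding C_def by simp_all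
  qed
qed

end
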